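(* Let $M=\begin{bmatrix} r & s\\ a & b\end{bmatrix}$ be an integer matrix of rank two with $r\ge s>0$, $0<a\le b$ and $\gcd(r,s)=1$. For $\ell\in\mathbb{N}$ let $G_\ell(M)$ be the band graph of $M$. If $\ell<r+s-1$, then every connected component of $G_\ell(M)$ is finite. If $\ell\ge r+s-1$, then for every $w_0\in\{0,1,\dots,\ell\}$ there exists $z_0\in\mathbb{N}$ such that $(w_0,z_0)$ belongs to an infinite connected component of $G_\ell(M)$.
   Context: $\mathbb{N}=\{0,1,2,\dots\}$. For $Q\subseteq\mathbb{Z}^n$ and an integer $n\times m$ matrix $M$, the graph $G_Q(M)$ has vertex set $Q$, and $u,v\in Q$ are joined by an edge iff $u-v$ or $v-u$ is a column of $M$. A connected component is infinite if it has infinitely many vertices, finite otherwise. For a $2\times 2$ integer matrix $M$ with positive entries and $\ell\in\mathbb{N}$, the band graph is $G_\ell(M)=G_{Q_\ell}(M)$ with $Q_\ell=\{u\in\mathbb{N}^2\mid u_1\le \ell\}$. *)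

theory Defs
  imports Main
begin

text \<open>Points of Z^2 are pairs of integers. A 2 x m integer matrix is represented by
  the set C of its columns. The graph G_Q(M): vertex set Q, u and v adjacent iff
  u - v or v - u is a column.\<close>

definition vdiff :: "int \<times> int \<Rightarrow> int \<times> int \<Rightarrow> int \<times> int" where
  "vdiff u v = (fst u - fst v, snd u - snd v)"

definition graph_edge :: "(int \<times> int) set \<Rightarrow> (int \<times> int) set \<Rightarrow> int \<times> int \<Rightarrow> int \<times> int \<Rightarrow> bool" where
  "graph_edge Q C u v \<longleftrightarrow> u \<in> Q \<and> v \<in> Q \<and> (vdiff u v \<in> C \<or> vdiff v u \<in> C)"

definition component :: "(int \<times> int) set \<Rightarrow> (int \<times> int) set \<Rightarrow> int \<times> int \<Rightarrow> (int \<times> int) set" where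
  "component Q C u = {v. (graph_edge Q C)\<^sup>*\<^sup>* u v}"

definition cols2 :: "int \<Rightarrow> int \<Rightarrow> int \<Rightarrow> int \<Rightarrow> (int \<times> int) set" where
  "cols2 r s a b = {(r, a), (s, b)}"

definition band :: "nat \<Rightarrow> (int \<times> int) set" where
  "band l = {(x, y). 0 \<le> x \<and> 0 \<le> y \<and> x \<le> int l}"

end

theory Submission
  imports Defs
begin

lemma edge_fwd:
  assumes "u \<in> band l" "v \<in> band l" "vdiff v u \<in> C"
  shows "graph_edge (band l) C u v"
  using assms unfolding graph_edge_def by auto

lemma edge_bwd:
  assumes "u \<in> band l" "v \<in> band l" "vdiff u v \<in> C"
  shows "graph_edge (band l) C u v"
  using assms unfolding graph_edge_def by auto

lemma cycle:
  fixes r s a b x y :: int and l :: nat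
  assumes r: "r>0" and s: "s>0" and a: "a\<ge>0" and b: "b\<ge>0" and L: "r+s-1 \<le> int l"
    and x: "0\<le>x" "x \<le> r+s-1" and y: "y \<ge> b*(r+s)"
  shows "(graph_edge (band l) (cols2 r s a b))\<^sup>*\<^sup>* (x,y) (x, y + a*s - b*r)"
proof -
  let ?R = "(graph_edge (band l) (cols2 r s a b))\<^sup>*\<^sup>*"
  have main: "int k \<le> r+s \<Longrightarrow> \<exists>u d. u \<ge> 0 \<and> d \<ge> 0 \<and> u+d = int k \<and> 0 \<le> x+r*u-s*d \<and> x+r*u-s*d \<le> r+s-1
      \<and> ?R (x,y) (x+r*u-s*d, y+a*u-b*d)" for k :: nat
  proof (induction k)
    case 0
    then show ?case using x by (intro exI[of _ 0]) auto
  next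
    case (Suc k)
    then obtain u d where ud: "u \<ge> 0" "d \<ge> 0" "u+d = int k" "0 \<le> x+r*u-s*d" "x+r*u-s*d \<le> r+s-1"
      "?R (x,y) (x+r*u-s*d, y+a*u-b*d)" by auto
    have k1: "int k + 1 \<le> r + s" using Suc.prems by simp
    have au: "a*u \<ge> 0" using a ud by simp
    have bd: "b*(d+1) \<le> b*(r+s)" using b ud k1 by (intro mult_left_mono) auto
    have yk: "y+a*u-b*d - b \<ge> 0" using au bd y by (simp add: algebra_simps)
    show ?case
    proof (cases "x+r*u-s*d < s")
      case True
      have e: "graph_edge (band l) (cols2 r s a b) (x+r*u-s*d, y+a*u-b*d) (x+r*(u+1)-s*d, y+a*(u+1)-b*d)"
        apply (rule edge_fwd)
        using True ud yk b L r a unfolding band_def vdiff_def cols2_def by (auto simp: algebra_simps)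
      show ?thesis
        apply (rule exI[of _ "u+1"], rule exI[of _ d])
        using ud True e r by (auto simp: algebra_simps)
    next
      case False
      have e: "graph_edge (band l) (cols2 r s a b) (x+r*u-s*d, y+a*u-b*d) (x+r*u-s*(d+1), y+a*u-b*(d+1))"
        apply (rule edge_bwd)
        using False ud yk b L r s unfolding band_def vdiff_def cols2_def by (auto simp: algebra_simps)
      show ?thesis
        apply (rule exI[of _ "u"], rule exI[of _ "d+1"])
        using ud False e r s by (auto simp: algebra_simps)
    qed
  qed
  obtain u d where ud: "u \<ge> 0" "d \<ge> 0" "u+d = r+s" "0 \<le> x+r*u-s*d" "x+r*u-s*d \<le> r+s-1"
      "?R (x,y) (x+r*u-s*d, y+a*u-b*d)" using main[of "nat (r+s)"] r s by auto
  have dd: "d = r+s-u" using ud(3) by simp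
  have eq: "x+r*u-s*d = x + (r+s)*(u-s)" unfolding dd by (simp add: algebra_simps)
  have "u = s"
  proof (rule ccontr)
    assume "u \<noteq> s"
    then consider "u - s \<ge> 1" | "u - s \<le> -1" by linarith
    then show False
    proof cases
      case 1
      have "(r+s)*(u-s) \<ge> (r+s)*1" using 1 r s by (intro mult_left_mono) auto
      then have "r+s \<le> (r+s)*(u-s)" by simp
      then show False using eq ud(4,5) x by linarith
    next
      case 2
      have "(r+s)*(u-s) \<le> (r+s)*(-1)" using 2 r s by (intro mult_left_mono) auto
      then have "(r+s)*(u-s) \<le> -(r+s)" by simp
      then show False using eq ud(4,5) x by linarith
    qed
  qed
  then have "d = r" using ud by simp
  with \<open>u = s\<close> ud show ?thesis by (simp add: algebra_simps)
qed


lemma cols2_swap: "cols2 s r b a = cols2 r s a b"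
  unfolding cols2_def by auto

lemma gain:
  fixes r s a b x y :: int and l :: nat
  assumes r: "r>0" and s: "s>0" and a: "a\<ge>0" and b: "b\<ge>0" and L: "r+s-1 \<le> int l"
    and x: "0\<le>x" "x \<le> r+s-1" and y: "y \<ge> (a+b)*(r+s)"
  shows "(graph_edge (band l) (cols2 r s a b))\<^sup>*\<^sup>* (x,y) (x, y + \<bar>a*s - b*r\<bar>)"
proof (cases "a*s - b*r \<ge> 0")
  case True
  have "b*(r+s) \<le> (a+b)*(r+s)" using a r s by (intro mult_right_mono) auto
  then have "(graph_edge (band l) (cols2 r s a b))\<^sup>*\<^sup>* (x,y) (x, y + a*s - b*r)"
    using cycle[OF r s a b L x] y by auto
  then show ?thesis using True by (simp add: algebra_simps)
next
  case False
  have "a*(s+r) \<le> (a+b)*(r+s)" using b r s by (simp add: mult_right_mono algebra_simps)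
  then have "(graph_edge (band l) (cols2 s r b a))\<^sup>*\<^sup>* (x,y) (x, y + b*r - a*s)"
    using cycle[OF s r b a _ ] L x y by (auto simp: algebra_simps)
  then show ?thesis using False by (simp add: cols2_swap algebra_simps)
qed

lemma gain_iter:
  fixes r s a b x y :: int and l :: nat
  assumes r: "r>0" and s: "s>0" and a: "a\<ge>0" and b: "b\<ge>0" and L: "r+s-1 \<le> int l"
    and x: "0\<le>x" "x \<le> r+s-1" and y: "y \<ge> (a+b)*(r+s)"
  shows "(graph_edge (band l) (cols2 r s a b))\<^sup>*\<^sup>* (x,y) (x, y + int k * \<bar>a*s - b*r\<bar>)"
proof (induction k)
  case 0
  then show ?case by simp
next
  case (Suc k)
  have "0 \<le> int k * \<bar>a*s - b*r\<bar>" by simp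
  then have h: "(a+b)*(r+s) \<le> y + int k * \<bar>a*s - b*r\<bar>" using y by linarith
  have "(graph_edge (band l) (cols2 r s a b))\<^sup>*\<^sup>* (x, y + int k * \<bar>a*s - b*r\<bar>)
      (x, y + int k * \<bar>a*s - b*r\<bar> + \<bar>a*s - b*r\<bar>)"
    using gain[OF r s a b L x h] .
  with Suc show ?case by (simp add: algebra_simps)
qed

lemma descent:
  fixes r s a b K :: int and l w :: nat
  assumes r: "r>0" and s: "s>0" and a: "a\<ge>0" and K: "K \<ge> 0"
    and w: "w \<le> l"
  shows "\<forall>z. z \<ge> K + a * int w \<longrightarrow> (\<exists>x y. 0 \<le> x \<and> x \<le> r+s-1 \<and> y \<ge> K \<and>
      (graph_edge (band l) (cols2 r s a b))\<^sup>*\<^sup>* (int w, z) (x,y))"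
  using w
proof (induction w rule: less_induct)
  case (less w)
  show ?case
  proof (intro allI impI)
    fix z assume z: "z \<ge> K + a * int w"
    have aw: "a * int w \<ge> 0" using a by simp
    show "\<exists>x y. 0 \<le> x \<and> x \<le> r+s-1 \<and> y \<ge> K \<and>
      (graph_edge (band l) (cols2 r s a b))\<^sup>*\<^sup>* (int w, z) (x,y)"
    proof (cases "int w \<le> r+s-1")
      case True
      then show ?thesis using z aw by (intro exI[of _ "int w"] exI[of _ z]) auto
    next
      case False
      define w' where "w' = nat (int w - r)"
      have w'i: "int w' = int w - r" using False s unfolding w'_def by simp
      have lt: "w' < w" using r w'i by simp
      have "a * 1 \<le> a * r" using r a by (intro mult_left_mono) auto
      then have "a * int w' + a \<le> a * int w" unfolding w'i
        by (simp add: algebra_simps)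
      then have z': "z - a \<ge> K + a * int w'" using z by simp
      obtain x y where xy: "0 \<le> x" "x \<le> r+s-1" "y \<ge> K"
        "(graph_edge (band l) (cols2 r s a b))\<^sup>*\<^sup>* (int w', z - a) (x,y)"
        using less.IH[OF lt] lt less.prems z' by fastforce
      have aw': "a * int w' \<ge> 0" using a by simp
      have h1: "z \<ge> a" using z' K aw' by linarith
      have h2: "z \<ge> 0" using z K aw by linarith
      have h3: "int w - r \<le> int l" using r less.prems by linarith
      have e: "graph_edge (band l) (cols2 r s a b) (int w, z) (int w', z - a)"
        apply (rule edge_bwd)
        using h1 h2 h3 w'i z' z K a aw less.prems unfolding band_def vdiff_def cols2_def by auto
      show ?thesis using xy e by (meson converse_rtranclp_into_rtranclp)
    qed
  qed
qed


lemma modN_shift: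
  fixes X N q :: int
  assumes "0 \<le> X" "X < N"
  shows "(X + N*q) mod N = X"
  using assms by simp

lemma inv1:
  fixes r s a b x0 y0 :: int and l :: nat
  assumes r: "r>0" and s: "s>0" and R: "(graph_edge (band l) (cols2 r s a b))\<^sup>*\<^sup>* (x0,y0) v"
    and x0: "0 \<le> x0" "x0 \<le> int l" and L: "int l < r+s-1"
  shows "\<exists>p q. fst v = x0 + r*p + s*q \<and> snd v = y0 + a*p + b*q \<and>
    (\<forall>t. min 0 (p-q) \<le> t \<and> t \<le> max 0 (p-q) \<longrightarrow> (x0 + r*t) mod (r+s) \<noteq> r+s-1)"
  using R
proof (induction rule: rtranclp_induct)
  case base
  have "(x0 + r*0) mod (r+s) = x0" using x0 L by simp
  then show ?case using L x0 by (intro exI[of _ 0]) auto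
next
  case (step v w)
  obtain p q where pq: "fst v = x0 + r*p + s*q" "snd v = y0 + a*p + b*q"
    "\<forall>t. min 0 (p-q) \<le> t \<and> t \<le> max 0 (p-q) \<longrightarrow> (x0 + r*t) mod (r+s) \<noteq> r+s-1"
    using step.IH by blast
  have wb: "w \<in> band l" and ed: "vdiff v w \<in> cols2 r s a b \<or> vdiff w v \<in> cols2 r s a b"
    using step.hyps(2) unfolding graph_edge_def by auto
  obtain p' q' where pq': "fst w = x0 + r*p' + s*q'" "snd w = y0 + a*p' + b*q'"
    "p'-q' = p-q+1 \<or> p'-q' = p-q-1"
  proof -
    from ed consider "vdiff v w = (r,a)" | "vdiff v w = (s,b)" | "vdiff w v = (r,a)" | "vdiff w v = (s,b)"
      unfolding cols2_def by auto
    then show thesis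
    proof cases
      case 1
      then show thesis using pq(1,2) unfolding vdiff_def
        by (intro that[of "p-1" q]) (auto simp: algebra_simps)
    next
      case 2
      then show thesis using pq(1,2) unfolding vdiff_def
        by (intro that[of p "q-1"]) (auto simp: algebra_simps)
    next
      case 3
      then show thesis using pq(1,2) unfolding vdiff_def
        by (intro that[of "p+1" q]) (auto simp: algebra_simps)
    next
      case 4
      then show thesis using pq(1,2) unfolding vdiff_def
        by (intro that[of p "q+1"]) (auto simp: algebra_simps)
    qed
  qed
  have fw: "0 \<le> fst w" "fst w \<le> int l" using wb unfolding band_def by auto
  have "x0 + r*(p'-q') = fst w + (r+s)*(-q')" using pq'(1) by (simp add: algebra_simps)
  then have "(x0 + r*(p'-q')) mod (r+s) = fst w" using modN_shift[of "fst w" "r+s" "-q'"] fw L by simp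
  then have nb: "(x0 + r*(p'-q')) mod (r+s) \<noteq> r+s-1" using fw L by simp
  have "\<forall>t. min 0 (p'-q') \<le> t \<and> t \<le> max 0 (p'-q') \<longrightarrow> (x0 + r*t) mod (r+s) \<noteq> r+s-1"
  proof (intro allI impI)
    fix t assume t: "min 0 (p'-q') \<le> t \<and> t \<le> max 0 (p'-q')"
    then have "t = p'-q' \<or> (min 0 (p-q) \<le> t \<and> t \<le> max 0 (p-q))" using pq'(3) by auto
    then show "(x0 + r*t) mod (r+s) \<noteq> r+s-1" using nb pq(3) by auto
  qed
  then show ?case using pq' by blast
qed

lemma bad_exists:
  fixes r s x0 :: int
  assumes r: "r>0" and s: "s>0" and g: "gcd r s = 1"
  shows "\<exists>t1. 0 \<le> t1 \<and> t1 < r+s \<and> (x0 + r*(t1+(r+s))) mod (r+s) = r+s-1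
      \<and> (x0 + r*(t1-(r+s))) mod (r+s) = r+s-1"
proof -
  have "gcd r (r+s) = 1" using g by simp
  then obtain u v where uv: "u*r + v*(r+s) = 1" using bezout_int[of r "r+s"] by auto
  define c where "c = r+s-1-x0"
  define t0 where "t0 = u*c"
  define t1 where "t1 = t0 mod (r+s)"
  have key: "(x0 + r*(t0 + (r+s)*m)) mod (r+s) = r+s-1" for m
  proof -
    have "x0 + r*(t0 + (r+s)*m) = (r+s-1) + (r+s)*(r*m - v*c)"
    proof -
      have ru: "r*u = 1 - v*(r+s)" using uv by (simp add: algebra_simps)
      have "r*t0 = (r*u)*c" unfolding t0_def by (simp add: mult.assoc)
      also have "... = c - v*(r+s)*c" unfolding ru by (simp add: algebra_simps)
      finally have "r*t0 = c - v*(r+s)*c" .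
      then show ?thesis unfolding c_def by (simp add: algebra_simps)
    qed
    then show ?thesis using modN_shift[of "r+s-1" "r+s"] r s by simp
  qed
  have t1a: "t1 + (r+s) = t0 + (r+s)*(1 - t0 div (r+s))" unfolding t1_def
    by (simp add: algebra_simps minus_div_mult_eq_mod[symmetric])
  have t1b: "t1 - (r+s) = t0 + (r+s)*(-1 - t0 div (r+s))" unfolding t1_def
    by (simp add: algebra_simps minus_div_mult_eq_mod[symmetric])
  show ?thesis
    apply (rule exI[of _ t1])
    using key t1a t1b r s unfolding t1_def by simp
qed


lemma reach_band:
  assumes "(graph_edge Q C)\<^sup>*\<^sup>* u v" "u \<in> Q" shows "v \<in> Q"
  using assms by (induction rule: rtranclp_induct) (auto simp: graph_edge_def)

lemma part1:
  fixes r s a b :: int and l :: nat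
  assumes r: "r>0" and s: "s>0" and g: "gcd r s = 1" and a: "a\<ge>0" and b: "b\<ge>0"
    and L: "int l < r+s-1" and u: "u \<in> band l"
  shows "finite (component (band l) (cols2 r s a b) u)"
proof -
  obtain x0 y0 where u0: "u = (x0,y0)" by force
  have x0: "0 \<le> x0" "x0 \<le> int l" using u u0 unfolding band_def by auto
  define N where "N = r+s"
  have N: "N \<ge> 2" using r s unfolding N_def by simp
  obtain t1 where t1: "0 \<le> t1" "t1 < N" "(x0 + r*(t1+N)) mod N = N-1"
      "(x0 + r*(t1-N)) mod N = N-1"
    using bad_exists[OF r s g, of x0] unfolding N_def by blast
  define B where "B = int l + x0 + 2*r*N"
  define Y where "Y = y0 + a*(B+2*N) + b*B"
  have sub: "component (band l) (cols2 r s a b) u \<subseteq> {0..int l} \<times> {0..Y}"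
  proof
    fix v assume "v \<in> component (band l) (cols2 r s a b) u"
    then have R: "(graph_edge (band l) (cols2 r s a b))\<^sup>*\<^sup>* (x0,y0) v"
      unfolding component_def u0 by simp
    have vb: "v \<in> band l" using reach_band[OF R] u u0 by simp
    obtain p q where pq: "fst v = x0 + r*p + s*q" "snd v = y0 + a*p + b*q"
      "\<forall>t. min 0 (p-q) \<le> t \<and> t \<le> max 0 (p-q) \<longrightarrow> (x0 + r*t) mod (r+s) \<noteq> r+s-1"
      using inv1[OF r s R x0 L] by blast
    define t where "t = p - q"
    have tu: "t < t1 + N"
    proof (rule ccontr)
      assume "\<not> t < t1 + N"
      then have "min 0 (p-q) \<le> t1+N \<and> t1+N \<le> max 0 (p-q)" using t1 N unfolding t_def by auto
      then show False using pq(3) t1(3) unfolding N_def by blast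
    qed
    have tl: "t > t1 - N"
    proof (rule ccontr)
      assume "\<not> t > t1 - N"
      then have "min 0 (p-q) \<le> t1-N \<and> t1-N \<le> max 0 (p-q)" using t1 N unfolding t_def by auto
      then show False using pq(3) t1(4) unfolding N_def by blast
    qed
    have tabs: "\<bar>t\<bar> \<le> 2*N" using tu tl t1 by auto
    have fv: "0 \<le> fst v" "fst v \<le> int l" "0 \<le> snd v" using vb unfolding band_def by auto
    have Nq: "N*q = fst v - x0 - r*t" using pq(1) unfolding t_def N_def by (simp add: algebra_simps)
    have rt: "\<bar>r*t\<bar> \<le> r*(2*N)" using tabs r by (simp add: abs_mult mult_left_mono)
    have NqB: "\<bar>N*q\<bar> \<le> B" unfolding Nq B_def using rt fv x0 by (simp add: algebra_simps)
    have "\<bar>q\<bar> \<le> \<bar>N*q\<bar>" using N by (simp add: abs_mult mult_le_cancel_right1)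
    then have qB: "\<bar>q\<bar> \<le> B" using NqB by linarith
    have pB: "\<bar>p\<bar> \<le> B + 2*N" using qB tabs unfolding t_def by linarith
    have "a*p \<le> a*(B+2*N)"
    proof -
      have "a*p \<le> a*\<bar>p\<bar>" using a by (intro mult_left_mono) auto
      also have "... \<le> a*(B+2*N)" using a pB by (intro mult_left_mono) auto
      finally show ?thesis .
    qed
    moreover have "b*q \<le> b*B"
    proof -
      have "b*q \<le> b*\<bar>q\<bar>" using b by (intro mult_left_mono) auto
      also have "... \<le> b*B" using b qB by (intro mult_left_mono) auto
      finally show ?thesis .
    qed
    ultimately have "snd v \<le> Y" unfolding Y_def pq(2) by linarith
    then show "v \<in> {0..int l} \<times> {0..Y}" using fv by (cases v) auto
  qed
  show ?thesis by (rule finite_subset[OF sub]) auto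
qed


theorem proposition2p5:
  fixes r s a b :: int and l :: nat
  assumes rank2: "r * b - s * a \<noteq> 0"
    and "r \<ge> s" and "s > 0" and "0 < a" and "a \<le> b" and "gcd r s = 1"
  shows "(int l < r + s - 1 \<longrightarrow>
            (\<forall>u \<in> band l. finite (component (band l) (cols2 r s a b) u)))
       \<and> (int l \<ge> r + s - 1 \<longrightarrow>
            (\<forall>w0 \<le> l. \<exists>z0 :: nat.
                infinite (component (band l) (cols2 r s a b) (int w0, int z0))))"
proof -
  have r: "r > 0" and s: "s > 0" and a: "a \<ge> 0" and b: "b \<ge> 0" using assms by auto
  have g: "gcd r s = 1" using assms by simp
  show ?thesis
  proof (intro conjI impI ballI allI)
    fix u assume "int l < r + s - 1" "u \<in> band l"
    then show "finite (component (band l) (cols2 r s a b) u)" using part1[OF r s g a b] by blast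
  next
    fix w0 assume L: "int l \<ge> r + s - 1" and w0: "w0 \<le> l"
    define K where "K = (a+b)*(r+s)"
    have K: "K \<ge> 0" unfolding K_def using a b r s by simp
    define z0 where "z0 = nat (K + a * int w0)"
    have "int z0 = K + a * int w0" unfolding z0_def using K a by simp
    then obtain x y where xy: "0 \<le> x" "x \<le> r+s-1" "y \<ge> K"
        "(graph_edge (band l) (cols2 r s a b))\<^sup>*\<^sup>* (int w0, int z0) (x,y)"
      using descent[OF r s a K w0, of b] by auto
    define D where "D = \<bar>a*s - b*r\<bar>"
    have D: "D > 0" unfolding D_def using rank2 by (auto simp: algebra_simps)
    let ?f = "\<lambda>k::nat. (x, y + int k * D)"
    have "range ?f \<subseteq> component (band l) (cols2 r s a b) (int w0, int z0)"
    proof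
      fix v assume "v \<in> range ?f"
      then obtain k where k: "v = ?f k" by auto
      have "(graph_edge (band l) (cols2 r s a b))\<^sup>*\<^sup>* (x,y) (x, y + int k * D)"
        using gain_iter[OF r s a b L xy(1,2)] xy(3) unfolding K_def D_def by blast
      then show "v \<in> component (band l) (cols2 r s a b) (int w0, int z0)"
        unfolding component_def k using xy(4) by simp
    qed
    moreover have "inj ?f" using D by (auto simp: inj_def)
    then have "infinite (range ?f)" using finite_imageD infinite_UNIV_nat by blast
    ultimately show "\<exists>z0 :: nat. infinite (component (band l) (cols2 r s a b) (int w0, int z0))"
      using infinite_super by blast
  qed
qed

end
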